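(* Let $\omega>0$, $-\frac{\pi}{2}<\theta_1<\theta_2<0$, $\mathcal{C}=\{(\varphi,\theta)\in[0,2\pi)\times(\theta_1,\theta_2)\}$, and let $\psi_1\neq\psi_2$ be real constants. Given $\lambda\le 0$ and $\Upsilon\in\mathbb{R}$, let $\Psi_{\lambda,\Upsilon}$ be the unique solution of \[(\Psi'(\theta)\cos\theta)'=-\lambda\Psi(\theta)\cos\theta+\Upsilon\cos\theta-\omega\sin 2\theta,\ \theta\in(\theta_1,\theta_2),\qquad \Psi(\theta_1)=\psi_1,\ \Psi(\theta_2)=\psi_2,\] let $\mathbf{u}^*_{\lambda,\Upsilon}=u^*_{\lambda,\Upsilon}\mathbf{e}_\varphi$ with $u^*_{\lambda,\Upsilon}=-\Psi_{\lambda,\Upsilon}'$ be the corresponding steady zonal solution of the system below, and let $\Omega^*_{\lambda,\Upsilon}$ be its vorticity. Suppose that $\mathbf{u}(t)=u(t)\mathbf{e}_\varphi+v(t)\mathbf{e}_\theta$ is a time-dependent solution (with some pressure $p$) of \begin{align*} & u_t + \frac{uu_\varphi}{\cos\theta} + vu_\theta - uv\tan\theta - 2\omega v\sin\theta = -\frac{p_\varphi}{\cos\theta},\\ & v_t + \frac{uv_\varphi}{\cos\theta} + vv_\theta + u^2\tan\theta + 2\omega u\sin\theta = -p_\theta,\\ & u_\varphi + (v\cos\theta)_\theta = 0 \end{align*} in $\mathcal{C}$, with $v=0$ on $\{\theta=\theta_1\}\cup\{\theta=\theta_2\}$ for all $t\ge0$, with initial data $\mathbf{u}|_{t=0}=\mathbf{u}_0=u_0\mathbf{e}_\varphi+v_0\mathbf{e}_\theta$,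 and let $\Omega(t)$ denote its vorticity, with $\Omega|_{t=0}=\Omega_0$. Then for all $t\ge 0$, \[-\lambda\|\mathbf{u}(t)-\mathbf{u}^*_{\lambda,\Upsilon}\|^2_{L^2(\mathcal{C})}+\|\Omega(t)-\Omega^*_{\lambda,\Upsilon}\|^2_{L^2(\mathcal{C})}=-\lambda\|\mathbf{u}_0-\mathbf{u}^*_{\lambda,\Upsilon}\|^2_{L^2(\mathcal{C})}+\|\Omega_0-\Omega^*_{\lambda,\Upsilon}\|^2_{L^2(\mathcal{C})}.\]
   Context: Spherical coordinates $(\varphi,\theta)$ on the unit sphere: $(\varphi,\theta)\mapsto(\cos\varphi\cos\theta,\sin\varphi\cos\theta,\sin\theta)$, with unit tangent vectors $\mathbf{e}_\varphi,\mathbf{e}_\theta$; all functions are $2\pi$-periodic in $\varphi$. The area element is $d\sigma=\cos\theta\,d\varphi\,d\theta$, and $L^2(\mathcal{C})$ norms are taken with respect to $d\sigma$ (for a vector field $f\mathbf{e}_\varphi+g\mathbf{e}_\theta$, the pointwise norm is $\sqrt{f^2+g^2}$). The vorticity of $u\,\mathbf{e}_\varphi+v\,\mathbf{e}_\theta$ is $\Omega=\frac{1}{\cos\theta}[v_\varphi-(u\cos\theta)_\theta]$. The solution $\mathbf{u}$ is understood to be a classical (smooth) solution. *)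

theory Defs
  imports "HOL-Analysis.Analysis"
begin

(* Points (t, phi, theta) of time x longitude x latitude *)
type_synonym pt3 = "real \<times> real \<times> real"

definition dir3 :: "nat \<Rightarrow> pt3" where
  "dir3 i = (if i = 0 then (1,0,0) else if i = 1 then (0,1,0) else (0,0,1))"

definition pdiff3 :: "nat \<Rightarrow> (pt3 \<Rightarrow> real) \<Rightarrow> pt3 \<Rightarrow> real" where
  "pdiff3 i f x = deriv (\<lambda>s. f (x + s *\<^sub>R dir3 i)) 0"

(* C^infinity on an open set: all iterated partial derivatives are (Frechet) differentiable *)
definition smooth3_on :: "pt3 set \<Rightarrow> (pt3 \<Rightarrow> real) \<Rightarrow> bool" where
  "smooth3_on U f \<longleftrightarrow> open U \<and>
     (\<forall>ds. set ds \<subseteq> {0,1,2} \<longrightarrow> foldr pdiff3 ds f differentiable_on U)"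

definition d_t :: "(real \<Rightarrow> real \<Rightarrow> real \<Rightarrow> real) \<Rightarrow> real \<Rightarrow> real \<Rightarrow> real \<Rightarrow> real" where
  "d_t f t ph th = deriv (\<lambda>s. f s ph th) t"
definition d_phi :: "(real \<Rightarrow> real \<Rightarrow> real \<Rightarrow> real) \<Rightarrow> real \<Rightarrow> real \<Rightarrow> real \<Rightarrow> real" where
  "d_phi f t ph th = deriv (\<lambda>s. f t s th) ph"
definition d_theta :: "(real \<Rightarrow> real \<Rightarrow> real \<Rightarrow> real) \<Rightarrow> real \<Rightarrow> real \<Rightarrow> real \<Rightarrow> real" where
  "d_theta f t ph th = deriv (\<lambda>s. f t ph s) th"

definition vort :: "(real \<Rightarrow> real \<Rightarrow> real \<Rightarrow> real) \<Rightarrow> (real \<Rightarrow> real \<Rightarrow> real \<Rightarrow> real)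
    \<Rightarrow> real \<Rightarrow> real \<Rightarrow> real \<Rightarrow> real" where
  "vort u v t ph th = (1 / cos th) * (d_phi v t ph th - deriv (\<lambda>s. u t ph s * cos s) th)"

definition zonal_vort :: "(real \<Rightarrow> real) \<Rightarrow> real \<Rightarrow> real" where
  "zonal_vort us th = (1 / cos th) * (0 - deriv (\<lambda>s. us s * cos s) th)"

(* squared L^2 norm on C = [0,2pi) x (th1,th2) w.r.t. cos theta dphi dtheta
   of the vector field f e_phi + g e_theta (for a scalar take g = 0) *)
definition L2sq :: "real \<Rightarrow> real \<Rightarrow> (real \<Rightarrow> real \<Rightarrow> real) \<Rightarrow> (real \<Rightarrow> real \<Rightarrow> real) \<Rightarrow> real" where
  "L2sq th1 th2 f g = (LINT x : ({0..<2*pi} \<times> {th1<..<th2}) | lborel.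
       ((f (fst x) (snd x))\<^sup>2 + (g (fst x) (snd x))\<^sup>2) * cos (snd x))"

end

theory Submission
  imports Defs
begin

lemma dir3_simps[simp]: "dir3 0 = (1,0,0)" "dir3 (Suc 0) = (0,1,0)" "dir3 2 = (0,0,1)"
  by (auto simp: dir3_def)

lemma norm_dir3: "i \<le> 2 \<Longrightarrow> norm (dir3 i) = 1"
  by (auto simp: dir3_def norm_Pair)

lemma pd_dir:
  fixes F :: "pt3 \<Rightarrow> real"
  assumes "F differentiable (at (y + a *\<^sub>R dir3 i))"
  shows "((\<lambda>s. F (y + s *\<^sub>R dir3 i)) has_real_derivative pdiff3 i F (y + a *\<^sub>R dir3 i)) (at a)"
proof -
  obtain F' where F': "(F has_derivative F') (at (y + a *\<^sub>R dir3 i))"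
    using assms by (auto simp: differentiable_def)
  have lin: "linear F'" using F' has_derivative_linear by blast
  have gen: "((\<lambda>s. F (z + s *\<^sub>R dir3 i)) has_real_derivative F' (dir3 i)) (at b)"
    if "(F has_derivative F') (at (z + b *\<^sub>R dir3 i))" for z b
  proof -
    have inner: "((\<lambda>s. z + s *\<^sub>R dir3 i) has_derivative (\<lambda>h. h *\<^sub>R dir3 i)) (at b)"
      by (auto intro!: derivative_eq_intros)
    have "((F \<circ> (\<lambda>s. z + s *\<^sub>R dir3 i)) has_derivative (F' \<circ> (\<lambda>h. h *\<^sub>R dir3 i))) (at b)"
      by (rule diff_chain_at[OF inner]) (use that in simp)
    moreover have "(F' \<circ> (\<lambda>h. h *\<^sub>R dir3 i)) = (\<lambda>h. F' (dir3 i) * h)"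
      using lin by (auto simp: linear_scale o_def)
    ultimately show ?thesis
      by (simp add: has_field_derivative_def o_def)
  qed
  have "pdiff3 i F (y + a *\<^sub>R dir3 i) = F' (dir3 i)"
    unfolding pdiff3_def
    by (rule DERIV_imp_deriv, rule gen) (use F' in simp)
  then show ?thesis using gen[OF F'] by simp
qed

lemma pd0: "F differentiable (at (t,ph,th)) \<Longrightarrow>
   ((\<lambda>s. F (s,ph,th)) has_real_derivative pdiff3 0 F (t,ph,th)) (at t)"
  using pd_dir[of F "(0,ph,th)" t 0] by simp
lemma pd1: "F differentiable (at (t,ph,th)) \<Longrightarrow>
   ((\<lambda>s. F (t,s,th)) has_real_derivative pdiff3 1 F (t,ph,th)) (at ph)"
  using pd_dir[of F "(t,0,th)" ph 1] by simp
lemma pd2: "F differentiable (at (t,ph,th)) \<Longrightarrow>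
   ((\<lambda>s. F (t,ph,s)) has_real_derivative pdiff3 2 F (t,ph,th)) (at th)"
  using pd_dir[of F "(t,ph,0)" th 2] by simp

lemma smooth_diff: "smooth3_on U F \<Longrightarrow> x \<in> U \<Longrightarrow> F differentiable (at x)"
  unfolding smooth3_on_def
  by (metis differentiable_on_def at_within_open empty_subsetI foldr_Nil id_apply set_empty)

lemma smooth_pd: "smooth3_on U F \<Longrightarrow> i \<le> 2 \<Longrightarrow> smooth3_on U (pdiff3 i F)"
  unfolding smooth3_on_def
proof (intro conjI allI impI)
  fix ds :: "nat list"
  assume a: "open U \<and> (\<forall>ds. set ds \<subseteq> {0, 1, 2} \<longrightarrow> foldr pdiff3 ds F differentiable_on U)"
    "i \<le> 2" "set ds \<subseteq> {0,1,2}"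
  then have "set (ds @ [i]) \<subseteq> {0,1,2}" by auto
  then have "foldr pdiff3 (ds @ [i]) F differentiable_on U" using a by blast
  then show "foldr pdiff3 ds (pdiff3 i F) differentiable_on U" by simp
qed (auto)

lemma smooth_cont: "smooth3_on U F \<Longrightarrow> continuous_on U F"
  unfolding smooth3_on_def
  by (metis differentiable_imp_continuous_on empty_subsetI foldr_Nil id_apply set_empty)

lemma schwarz2:
  fixes f fa fb fab fba :: "real \<Rightarrow> real \<Rightarrow> real"
  assumes r: "r > 0"
  and da: "\<And>a b. a \<in> {xc-r..xc+r} \<Longrightarrow> b \<in> {yc-r..yc+r} \<Longrightarrow> ((\<lambda>a. f a b) has_real_derivative fa a b) (at a)"
  and db: "\<And>a b. a \<in> {xc-r..xc+r} \<Longrightarrow> b \<in> {yc-r..yc+r} \<Longrightarrow> ((\<lambda>b. f a b) has_real_derivative fb a b) (at b)"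
  and dab: "\<And>a b. a \<in> {xc-r..xc+r} \<Longrightarrow> b \<in> {yc-r..yc+r} \<Longrightarrow> ((\<lambda>b. fa a b) has_real_derivative fab a b) (at b)"
  and dba: "\<And>a b. a \<in> {xc-r..xc+r} \<Longrightarrow> b \<in> {yc-r..yc+r} \<Longrightarrow> ((\<lambda>a. fb a b) has_real_derivative fba a b) (at a)"
  and cab: "continuous_on ({xc-r..xc+r} \<times> {yc-r..yc+r}) (\<lambda>(a,b). fab a b)"
  and cba: "continuous_on ({xc-r..xc+r} \<times> {yc-r..yc+r}) (\<lambda>(a,b). fba a b)"
  shows "fab xc yc = fba xc yc"
proof -
  define X where "X = {xc-r..xc+r}"
  define Y where "Y = {yc-r..yc+r}"
  define lo where "lo = yc - r"
  have xcX: "xc \<in> X" and ycY: "yc \<in> Y" using r by (auto simp: X_def Y_def)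
  have sub: "{lo..y} \<subseteq> Y" if "y \<in> Y" for y using that by (auto simp: Y_def lo_def)
  have cfba: "continuous_on Y (fba xc)"
    by (rule continuous_on_compose2[OF cba, where f="\<lambda>y. (xc, y)", simplified])
       (use xcX in \<open>auto simp: X_def Y_def intro!: continuous_intros\<close>)
  have key: "fa xc y - fa xc lo = integral {lo..y} (fba xc)" if yY: "y \<in> Y" for y
  proof -
    have lo_le: "lo \<le> y" using yY by (auto simp: Y_def lo_def)
    have ftc: "(fb a has_integral (f a y - f a lo)) {lo..y}" if "a \<in> X" for a
      apply (rule fundamental_theorem_of_calculus[OF lo_le])
      apply (rule has_vector_derivative_at_within)
      using db[of a] that sub[OF yY] by (auto simp: X_def Y_def has_real_derivative_iff_has_vector_derivative[symmetric])
    have lr: "((\<lambda>a. integral (cbox lo y) (fb a)) has_field_derivative integral (cbox lo y) (fba xc)) (at xc within X)"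
    proof (rule leibniz_rule_field_derivative)
      show "((\<lambda>a. fb a s) has_field_derivative fba a s) (at a within X)" if "a \<in> X" "s \<in> cbox lo y" for a s
        using dba[of a s] that sub[OF yY] by (auto simp: X_def Y_def intro: has_field_derivative_at_within)
      show "fb a integrable_on cbox lo y" if "a \<in> X" for a using ftc[OF that] by auto
      show "continuous_on (X \<times> cbox lo y) (\<lambda>(x, t). fba x t)"
        by (rule continuous_on_subset[OF cba]) (use sub[OF yY] in \<open>auto simp: X_def Y_def\<close>)
      show "xc \<in> X" "convex X" using xcX by (auto simp: X_def)
    qed
    have "integral (cbox lo y) (fb a) = f a y - f a lo" if "a \<in> X" for a
      using ftc[OF that] by (simp add: integral_unique)
    have lr': "((\<lambda>a. f a y - f a lo) has_field_derivative integral {lo..y} (fba xc)) (at xc)"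
    proof -
      have "at xc within X = at xc" using r by (simp add: X_def at_within_Icc_at)
      with lr have "((\<lambda>a. integral (cbox lo y) (fb a)) has_field_derivative integral {lo..y} (fba xc)) (at xc)"
        by simp
      then show ?thesis
        apply (rule has_field_derivative_transform_within_open[where S="{xc-r<..<xc+r}"])
        using r ftc by (auto simp: X_def integral_unique)
    qed
    have "((\<lambda>a. f a y - f a lo) has_field_derivative fa xc y - fa xc lo) (at xc)"
      using xcX yY by (auto intro!: derivative_eq_intros da simp: X_def Y_def lo_def)
    then show ?thesis using lr' DERIV_unique by blast
  qed
  have d1: "((\<lambda>y. integral {lo..y} (fba xc)) has_field_derivative fba xc yc) (at yc)"
  proof -
    have "((\<lambda>y. integral {lo..y} (fba xc)) has_vector_derivative fba xc yc) (at yc within Y)"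
      using integral_has_vector_derivative[OF cfba[unfolded Y_def] ycY[unfolded Y_def]]
      by (simp add: Y_def lo_def)
    moreover have "at yc within Y = at yc" using r by (simp add: Y_def at_within_Icc_at)
    ultimately show ?thesis by (simp add: has_real_derivative_iff_has_vector_derivative)
  qed
  have d2: "((\<lambda>y. integral {lo..y} (fba xc)) has_field_derivative fab xc yc) (at yc)"
  proof -
    have "((\<lambda>y. fa xc y - fa xc lo) has_field_derivative fab xc yc) (at yc)"
      using xcX ycY by (auto intro!: derivative_eq_intros dab simp: X_def Y_def)
    then show ?thesis
      apply (rule has_field_derivative_transform_within_open[where S="{yc-r<..<yc+r}"])
      using r key by (auto simp: Y_def)
  qed
  show ?thesis using d1 d2 DERIV_unique by blast
qed

lemma schwarz3:
  assumes sm: "smooth3_on U F" and xU: "x \<in> U" and ij: "i \<le> 2" "j \<le> 2"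
  shows "pdiff3 i (pdiff3 j F) x = pdiff3 j (pdiff3 i F) x"
proof (cases "i = j")
  case True then show ?thesis by simp
next
  case False
  have opU: "open U" using sm by (simp add: smooth3_on_def)
  obtain e where e: "e > 0" "ball x e \<subseteq> U" using opU xU open_contains_ball by blast
  define r where "r = e / 3"
  define g where "g a b = x + a *\<^sub>R dir3 i + b *\<^sub>R dir3 j" for a b
  have gU: "g a b \<in> U" if "a \<in> {0-r..0+r}" "b \<in> {0-r..0+r}" for a b
  proof -
    have "norm (a *\<^sub>R dir3 i + b *\<^sub>R dir3 j) \<le> norm (a *\<^sub>R dir3 i) + norm (b *\<^sub>R dir3 j)"
      by (rule norm_triangle_ineq)
    also have "\<dots> = \<bar>a\<bar> + \<bar>b\<bar>" using norm_dir3 ij by simp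
    also have "\<dots> < e" using that e by (auto simp: r_def)
    finally have "dist x (g a b) < e" by (simp add: g_def dist_norm add.assoc norm_minus_commute add.commute)
    then show ?thesis using e by auto
  qed
  have dI: "((\<lambda>a. H (g a b)) has_real_derivative pdiff3 i H (g a b)) (at a)"
    if "smooth3_on U H" "g a b \<in> U" for H a b
  proof -
    have e1: "g a' b = (x + b *\<^sub>R dir3 j) + a' *\<^sub>R dir3 i" for a' by (simp add: g_def algebra_simps)
    show ?thesis unfolding e1
      by (rule pd_dir, rule smooth_diff[OF that(1)]) (use that(2) e1 in simp)
  qed
  have dJ: "((\<lambda>b. H (g a b)) has_real_derivative pdiff3 j H (g a b)) (at b)"
    if "smooth3_on U H" "g a b \<in> U" for H a b
  proof -
    have e1: "g a b' = (x + a *\<^sub>R dir3 i) + b' *\<^sub>R dir3 j" for b' by (simp add: g_def algebra_simps)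
    show ?thesis unfolding e1
      by (rule pd_dir, rule smooth_diff[OF that(1)]) (use that(2) e1 in simp)
  qed
  have cont: "continuous_on ({0-r..0+r} \<times> {0-r..0+r}) (\<lambda>(a,b). H (g a b))"
    if "smooth3_on U H" for H
  proof -
    have "continuous_on ({0-r..0+r} \<times> {0-r..0+r}) (H \<circ> (\<lambda>(a,b). g a b))"
      apply (rule continuous_on_compose)
       apply (auto simp: g_def split_beta intro!: continuous_intros)[1]
      apply (rule continuous_on_subset[OF smooth_cont[OF that]])
      using gU by auto
    then show ?thesis by (simp add: o_def split_beta)
  qed
  have smi: "smooth3_on U (pdiff3 i F)" and smj: "smooth3_on U (pdiff3 j F)"
    using smooth_pd sm ij by auto
  have "pdiff3 j (pdiff3 i F) (g 0 0) = pdiff3 i (pdiff3 j F) (g 0 0)"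
  proof (rule schwarz2[where f="\<lambda>a b. F (g a b)" and fa="\<lambda>a b. pdiff3 i F (g a b)"
          and fb="\<lambda>a b. pdiff3 j F (g a b)" and r=r and xc=0 and yc=0
          and fab="\<lambda>a b. pdiff3 j (pdiff3 i F) (g a b)" and fba="\<lambda>a b. pdiff3 i (pdiff3 j F) (g a b)"])
    show "r > 0" using e by (simp add: r_def)
    show "continuous_on ({0-r..0+r} \<times> {0-r..0+r}) (\<lambda>(a,b). pdiff3 j (pdiff3 i F) (g a b))"
      by (rule cont, rule smooth_pd[OF smi ij(2)])
    show "continuous_on ({0-r..0+r} \<times> {0-r..0+r}) (\<lambda>(a,b). pdiff3 i (pdiff3 j F) (g a b))"
      by (rule cont, rule smooth_pd[OF smj ij(1)])
  qed (auto intro!: dI dJ cont gU sm smi smj smooth_pd ij)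
  then show ?thesis by (simp add: g_def)
qed

lemma psi_ext:
  fixes h g :: "real \<Rightarrow> real"
  assumes th: "th1 < th2" and cosp: "\<And>x. x \<in> {th1..th2} \<Longrightarrow> cos x > 0"
  and hd: "\<And>x. x \<in> {th1<..<th2} \<Longrightarrow> (h has_real_derivative g x) (at x)"
  and gc: "continuous_on {th1..th2} g"
  obtains P where "continuous_on {th1..th2} P" "\<And>x. x \<in> {th1<..<th2} \<Longrightarrow> h x = P x * cos x"
proof -
  define H where "H x = integral {th1..x} g" for x
  have Hd: "(H has_real_derivative g x) (at x)" if "x \<in> {th1<..<th2}" for x
  proof -
    have "(H has_vector_derivative g x) (at x within {th1..th2})"
      unfolding H_def by (rule integral_has_vector_derivative[OF gc]) (use that in auto)
    moreover have "at x within {th1..th2} = at x" using that by (simp add: at_within_Icc_at)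
    ultimately show ?thesis by (simp add: has_real_derivative_iff_has_vector_derivative)
  qed
  have "\<exists>c. \<forall>x\<in>{th1<..<th2}. h x - H x = c"
  proof (rule has_field_derivative_zero_constant)
    fix x assume x: "x \<in> {th1<..<th2}"
    have "((\<lambda>x. h x - H x) has_real_derivative g x - g x) (at x)"
      by (intro derivative_intros hd Hd x)
    then show "((\<lambda>x. h x - H x) has_real_derivative 0) (at x within {th1<..<th2})"
      by (simp add: has_field_derivative_at_within)
  qed (simp)
  then obtain k where k: "\<And>x. x \<in> {th1<..<th2} \<Longrightarrow> h x - H x = k" by blast
  define P where "P x = (H x + k) / cos x" for x
  have Hc: "continuous_on {th1..th2} H"
    unfolding H_def by (rule indefinite_integral_continuous_1, rule integrable_continuous_real[OF gc])
  have "continuous_on {th1..th2} P"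
    unfolding P_def using cosp by (auto intro!: continuous_intros Hc) (metis less_irrefl)
  moreover have "h x = P x * cos x" if "x \<in> {th1<..<th2}" for x
    using k[OF that] cosp[of x] that by (auto simp: P_def)
  ultimately show ?thesis using that by blast
qed

lemma box_sets: "({a..<b} \<times> {c<..<d} :: (real\<times>real) set) \<in> sets lborel"
proof -
  have "{a..<b} \<times> {c<..<d} \<in> sets (borel \<Otimes>\<^sub>M borel :: (real\<times>real) measure)"
    by (rule pair_measureI) auto
  then show ?thesis by (metis borel_prod sets_lborel)
qed

lemma L2_cbox:
  fixes h :: "real \<times> real \<Rightarrow> real"
  assumes hc: "continuous_on (cbox (0,th1) (2*pi,th2)) h"
  and eq: "\<And>ph th. ph \<in> {0..<2*pi} \<Longrightarrow> th \<in> {th1<..<th2} \<Longrightarrow>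
             ((f ph th)\<^sup>2 + (g ph th)\<^sup>2) * cos th = h (ph, th)"
  shows "L2sq th1 th2 f g = integral (cbox (0,th1) (2*pi,th2)) h"
proof -
  define A where "A = {0..<2*pi} \<times> {th1<..<th2}"
  define C where "C = cbox (0,th1) (2*pi,th2)"
  have AC: "A \<subseteq> C" by (auto simp: A_def C_def cbox_Pair_eq)
  have "L2sq th1 th2 f g = (LINT x : A | lborel. h x)"
    unfolding L2sq_def set_lebesgue_integral_def A_def
    by (rule Bochner_Integration.integral_cong[OF refl]) (auto simp: indicator_def eq)
  also have "\<dots> = integral A h"
  proof (rule set_borel_integral_eq_integral)
    have "set_integrable lborel C h"
      unfolding set_integrable_def C_def by (rule borel_integrable_compact[OF compact_cbox hc])
    then show "set_integrable lborel A h"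
      by (rule set_integrable_subset) (use AC box_sets in \<open>auto simp: A_def\<close>)
  qed
  also have "\<dots> = integral C h"
  proof (rule integral_spike_set)
    have "{x \<in> A - C. h x \<noteq> 0} = {}" using AC by auto
    then show "negligible {x \<in> A - C. h x \<noteq> 0}" by (metis negligible_empty)
    have "{x \<in> C - A. h x \<noteq> 0} \<subseteq> {x. (0,1) \<bullet> x = th1} \<union> {x. (0,1) \<bullet> x = th2} \<union> {x. (1,0) \<bullet> x = 2*pi}"
      by (auto simp: A_def C_def cbox_Pair_eq inner_Pair)
    moreover have "negligible ({x::real\<times>real. (0,1) \<bullet> x = th1} \<union> {x. (0,1) \<bullet> x = th2} \<union> {x. (1,0) \<bullet> x = 2*pi})"
      by (intro negligible_Un negligible_hyperplane) (auto simp: zero_prod_def)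
    ultimately show "negligible {x \<in> C - A. h x \<noteq> 0}" using negligible_subset by blast
  qed
  finally show ?thesis by (simp add: C_def)
qed

lemma alg:
  fixes U Up Uh Ut Uht Uhp Uhh Upp V Vp Vh Vt Vpt Vpp Vph Vhh P0 Pp Ph Pph Z Qs c s k lam om :: real
  assumes ck: "c * k = 1" and sc: "s\<^sup>2 + c\<^sup>2 = 1"
  and R1: "Ut = - (U * Up * k) - V * Uh + U * V * (s * k) + 2 * om * V * s - Pp * k" and R2: "Vt = - (U * Vp * k) - V * Vh - U\<^sup>2 * (s * k) - 2 * om * U * s - Ph" and R3: "Up + (Vh * c - V * s) = 0" and R1h: "Uht = - ((Uh * Up + U * Uhp) * k + U * Up * (s * k\<^sup>2)) - (Vh * Uh + V * Uhh) + ((Uh * V + U * Vh) * (s * k) + U * V * (c * k + s * (s * k\<^sup>2))) + 2 * om * (Vh * s + V * c) - (Pph * k + Pp * (s * k\<^sup>2))" and R2p: "Vpt = - ((Up * Vp + U * Vpp) * k) - (Vp * Vh + V * Vph) - 2 * U * Up * (s * k) - 2 * om * Up * s - Pph" and R3p: "Upp + (Vph * c - Vp * s) = 0" and R3h: "Uhp + (Vhh * c - Vh * s - (Vh * s + V * c)) = 0"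
  shows "- lam * (2 * (U + Z) * Ut + 2 * V * Vt) * c + 2 * ((Vp - (Uh * c - U * s)) * k - (Qs - 2 * om * s)) * ((Vpt - (Uht * c - Ut * s)) * k) * c = (lam * (Up * (2 * P0 + U\<^sup>2 + V\<^sup>2) + 2 * (U + Z) * (Pp + U * Up + V * Vp)) - Up * ((Vp - (Uh * c - U * s)) * k + 2 * om * s)\<^sup>2 - 2 * U * ((Vp - (Uh * c - U * s)) * k + 2 * om * s) * ((Vpp - (Uhp * c - Up * s)) * k) + 2 * Qs * (Up * ((Vp - (Uh * c - U * s)) * k + 2 * om * s) + U * ((Vpp - (Uhp * c - Up * s)) * k))) + ((c * Vh - s * V) * (lam * (2 * P0 + U\<^sup>2 + V\<^sup>2) - ((Vp - (Uh * c - U * s)) * k + 2 * om * s)\<^sup>2 + 2 * Qs * ((Vp - (Uh * c - U * s)) * k + 2 * om * s)) + c * V * (2 * lam * (Ph + U * Uh + V * Vh) - 2 * ((Vp - (Uh * c - U * s)) * k + 2 * om * s) * ((Vph - (Uhh * c - Uh * s - (Uh * s + U * c))) * k + (Vp - (Uh * c - U * s)) * (s * k\<^sup>2) + 2 * om * c) - 2 * lam * Z * ((Vp - (Uh * c - U * s)) * k + 2 * om * s) + 2 * Qs * ((Vph - (Uhh * c - Uh * s - (Uh * s + U * c))) * k + (Vp - (Uh * c - U * s)) * (s * k\<^sup>2) + 2 * om * c)))"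
proof -
  have Up: "Up = V * s - Vh * c" using R3 by simp
  have Upp: "Upp = Vp * s - Vph * c" using R3p by simp
  have Uhp: "Uhp = 2 * Vh * s + V * c - Vhh * c" using R3h by simp
  show ?thesis
    unfolding R1h R2p R1 R2 Upp Uhp Up using ck sc
    by algebra
qed

locale flow =
  fixes om th1 th2 lam Ups :: real and Psi Z :: "real \<Rightarrow> real"
    and u v p :: "real \<Rightarrow> real \<Rightarrow> real \<Rightarrow> real" and U :: "pt3 set"
  assumes th_bounds: "- (pi/2) < th1" "th1 < th2" "th2 < 0"
    and Psi_cont: "continuous_on {th1..th2} Psi"
    and Psi_diff: "\<forall>th\<in>{th1<..<th2}. Psi differentiable (at th)"
    and Psi_diff2: "\<forall>th\<in>{th1<..<th2}. (\<lambda>s. deriv Psi s * cos s) differentiable (at th)"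
    and Psi_ode: "\<forall>th\<in>{th1<..<th2}. deriv (\<lambda>s. deriv Psi s * cos s) th
                    = - lam * Psi th * cos th + Ups * cos th - om * sin (2 * th)"
    and Z_cont: "continuous_on {th1..th2} Z"
    and Z_eq: "\<And>th. th\<in>{th1<..<th2} \<Longrightarrow> deriv Psi th = Z th"
    and U_cover: "{(t, ph, th). 0 \<le> t \<and> th1 \<le> th \<and> th \<le> th2} \<subseteq> U"
    and u_smooth: "smooth3_on U (\<lambda>(t, ph, th). u t ph th)"
    and v_smooth: "smooth3_on U (\<lambda>(t, ph, th). v t ph th)"
    and p_smooth: "smooth3_on U (\<lambda>(t, ph, th). p t ph th)"
    and periodic: "\<forall>t ph th. u t (ph + 2*pi) th = u t ph th \<and> v t (ph + 2*pi) th = v t ph th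
                               \<and> p t (ph + 2*pi) th = p t ph th"
    and eq1: "\<forall>t>0. \<forall>ph. \<forall>th\<in>{th1<..<th2}.
        d_t u t ph th + u t ph th * d_phi u t ph th / cos th + v t ph th * d_theta u t ph th
        - u t ph th * v t ph th * tan th - 2 * om * v t ph th * sin th
        = - d_phi p t ph th / cos th"
    and eq2: "\<forall>t>0. \<forall>ph. \<forall>th\<in>{th1<..<th2}.
        d_t v t ph th + u t ph th * d_phi v t ph th / cos th + v t ph th * d_theta v t ph th
        + (u t ph th)\<^sup>2 * tan th + 2 * om * u t ph th * sin th
        = - d_theta p t ph th"
    and eq3: "\<forall>t>0. \<forall>ph. \<forall>th\<in>{th1<..<th2}.
        d_phi u t ph th + deriv (\<lambda>s. v t ph s * cos s) th = 0"
    and bc: "\<forall>t\<ge>0. \<forall>ph. v t ph th1 = 0 \<and> v t ph th2 = 0"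
begin

definition "Fu = (\<lambda>(t, ph, th). u t ph th)"
definition "Fv = (\<lambda>(t, ph, th). v t ph th)"
definition "Fp = (\<lambda>(t, ph, th). p t ph th)"
definition "ik th = 1 / cos th"
definition "Qs th = - lam * Psi th + Ups"

lemma cos_pos: "th \<in> {th1..th2} \<Longrightarrow> cos th > 0"
  using th_bounds by (intro cos_gt_zero_pi) auto

lemma ik_cos: "th \<in> {th1..th2} \<Longrightarrow> cos th * ik th = 1"
  using cos_pos[of th] by (simp add: ik_def)

lemma inU: "0 \<le> t \<Longrightarrow> th \<in> {th1..th2} \<Longrightarrow> (t, ph, th) \<in> U"
  using U_cover by auto

lemma openU: "open U" using u_smooth by (simp add: smooth3_on_def)

definition "Sm F \<longleftrightarrow> smooth3_on U F \<and> (\<forall>t ph th. F (t, ph + 2*pi, th) = F (t, ph, th))"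

lemma Sm_pd: "Sm F \<Longrightarrow> i \<le> 2 \<Longrightarrow> Sm (pdiff3 i F)"
proof -
  assume a: "Sm F" "i \<le> 2"
  have "pdiff3 i F (t, ph + 2*pi, th) = pdiff3 i F (t, ph, th)" for t ph th
  proof -
    have "F ((t, ph + 2*pi, th) + s *\<^sub>R dir3 i) = F ((t, ph, th) + s *\<^sub>R dir3 i)" for s
    proof -
      define z where "z = (t, ph, th) + s *\<^sub>R dir3 i"
      have "(t, ph + 2*pi, th) + s *\<^sub>R dir3 i = (fst z, fst (snd z) + 2*pi, snd (snd z))"
        by (cases "dir3 i") (simp add: z_def algebra_simps)
      moreover have "z = (fst z, fst (snd z), snd (snd z))" by simp
      ultimately show ?thesis using a(1) unfolding Sm_def z_def by metis
    qed
    then show ?thesis by (simp add: pdiff3_def)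
  qed
  then show ?thesis using a smooth_pd by (auto simp: Sm_def)
qed

lemma Sm_u: "Sm Fu" and Sm_v: "Sm Fv" and Sm_p: "Sm Fp"
  using u_smooth v_smooth p_smooth periodic by (auto simp: Sm_def Fu_def Fv_def Fp_def)

lemma Sm_smooth: "Sm F \<Longrightarrow> smooth3_on U F" by (simp add: Sm_def)
lemma Sm_per: "Sm F \<Longrightarrow> F (t, ph + 2*pi, th) = F (t, ph, th)" by (simp add: Sm_def)

lemma dT: "Sm F \<Longrightarrow> 0 \<le> t \<Longrightarrow> th \<in> {th1..th2} \<Longrightarrow>
   ((\<lambda>s. F (s, ph, th)) has_real_derivative pdiff3 0 F (t, ph, th)) (at t)"
  by (rule pd0, rule smooth_diff[OF Sm_smooth inU])
lemma dP: "Sm F \<Longrightarrow> 0 \<le> t \<Longrightarrow> th \<in> {th1..th2} \<Longrightarrow>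
   ((\<lambda>s. F (t, s, th)) has_real_derivative pdiff3 1 F (t, ph, th)) (at ph)"
  by (rule pd1, rule smooth_diff[OF Sm_smooth inU])
lemma dH: "Sm F \<Longrightarrow> 0 \<le> t \<Longrightarrow> th \<in> {th1..th2} \<Longrightarrow>
   ((\<lambda>s. F (t, ph, s)) has_real_derivative pdiff3 2 F (t, ph, th)) (at th)"
  by (rule pd2, rule smooth_diff[OF Sm_smooth inU])

lemma sw: "Sm F \<Longrightarrow> 0 \<le> t \<Longrightarrow> th \<in> {th1..th2} \<Longrightarrow> i \<le> 2 \<Longrightarrow> j \<le> 2 \<Longrightarrow>
   pdiff3 i (pdiff3 j F) (t, ph, th) = pdiff3 j (pdiff3 i F) (t, ph, th)"
  by (rule schwarz3[OF Sm_smooth inU])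

lemma ik_deriv: "th \<in> {th1..th2} \<Longrightarrow> (ik has_real_derivative sin th * (ik th)\<^sup>2) (at th)"
  unfolding ik_def using cos_pos[of th]
  by (auto intro!: derivative_eq_intros simp: power2_eq_square field_simps)

lemma Qs_deriv: "th \<in> {th1<..<th2} \<Longrightarrow> (Qs has_real_derivative - lam * Z th) (at th)"
proof -
  assume th: "th \<in> {th1<..<th2}"
  have "(Psi has_real_derivative deriv Psi th) (at th)"
    using Psi_diff th by (simp add: DERIV_deriv_iff_real_differentiable)
  then show ?thesis unfolding Qs_def using Z_eq[OF th]
    by (auto intro!: derivative_eq_intros)
qed

lemma Qs_cont: "continuous_on {th1..th2} Qs"
  unfolding Qs_def by (intro continuous_intros Psi_cont)

end

context flow begin

definition "uT = pdiff3 0 Fu"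
definition "uP = pdiff3 1 Fu"
definition "uH = pdiff3 2 Fu"
definition "uHT = pdiff3 0 uH"
definition "uHP = pdiff3 1 uH"
definition "uHH = pdiff3 2 uH"
definition "uPP = pdiff3 1 uP"
definition "vT = pdiff3 0 Fv"
definition "vP = pdiff3 1 Fv"
definition "vH = pdiff3 2 Fv"
definition "vPT = pdiff3 0 vP"
definition "vPP = pdiff3 1 vP"
definition "vPH = pdiff3 2 vP"
definition "vHH = pdiff3 2 vH"
definition "pP = pdiff3 1 Fp"
definition "pH = pdiff3 2 Fp"
definition "pPH = pdiff3 2 pP"

lemmas Sm_all = Sm_u Sm_v Sm_p
lemma Sm_1: "Sm uT" "Sm uP" "Sm uH" "Sm vT" "Sm vP" "Sm vH" "Sm pP" "Sm pH"
  by (auto simp: uT_def uP_def uH_def vT_def vP_def vH_def pP_def pH_def intro!: Sm_pd Sm_all)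
lemma Sm_2: "Sm uHT" "Sm uHP" "Sm uHH" "Sm uPP" "Sm vPT" "Sm vPP" "Sm vPH" "Sm vHH" "Sm pPH"
  using Sm_1 by (auto simp: uHT_def uHP_def uHH_def uPP_def vPT_def vPP_def vPH_def vHH_def pPH_def intro!: Sm_pd)

lemma cont3[continuous_intros]:
  assumes "Sm F" "continuous_on S f1" "continuous_on S f2" "continuous_on S f3"
    "\<And>z. z \<in> S \<Longrightarrow> 0 \<le> f1 z" "\<And>z. z \<in> S \<Longrightarrow> f3 z \<in> {th1..th2}"
  shows "continuous_on S (\<lambda>z. F (f1 z, f2 z, f3 z))"
proof -
  have "continuous_on S (\<lambda>z. (f1 z, f2 z, f3 z))" using assms by (intro continuous_intros)
  then show ?thesis
    by (rule continuous_on_compose2[OF smooth_cont[OF Sm_smooth[OF assms(1)]]])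
       (use assms inU in auto)
qed

lemma contZ[continuous_intros]:
  "continuous_on S f \<Longrightarrow> (\<And>z. z \<in> S \<Longrightarrow> f z \<in> {th1..th2}) \<Longrightarrow> continuous_on S (\<lambda>z. Z (f z))"
  by (rule continuous_on_compose2[OF Z_cont]) auto
lemma contQs[continuous_intros]:
  "continuous_on S f \<Longrightarrow> (\<And>z. z \<in> S \<Longrightarrow> f z \<in> {th1..th2}) \<Longrightarrow> continuous_on S (\<lambda>z. Qs (f z))"
  by (rule continuous_on_compose2[OF Qs_cont]) auto
lemma contik[continuous_intros]:
  fixes S :: "'a::t2_space set"
  shows "continuous_on S f \<Longrightarrow> (\<And>z. z \<in> S \<Longrightarrow> f z \<in> {th1..th2}) \<Longrightarrow> continuous_on S (\<lambda>z. ik (f z))"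
proof -
  assume a: "continuous_on S f" "\<And>z. z \<in> S \<Longrightarrow> f z \<in> {th1..th2}"
  have "continuous_on S (\<lambda>z. cos (f z))" by (intro continuous_intros a)
  moreover have "\<forall>z\<in>S. cos (f z) \<noteq> 0" using a cos_pos by (metis less_irrefl)
  ultimately show ?thesis unfolding ik_def by (intro continuous_intros a(1)) auto
qed

definition "C = cbox (0, th1) (2*pi, th2)"
lemma C_mem: "y \<in> C \<longleftrightarrow> fst y \<in> {0..2*pi} \<and> snd y \<in> {th1..th2}"
  by (cases y) (auto simp: C_def cbox_Pair_eq)

definition "Omg t ph th = (vP (t,ph,th) - (uH (t,ph,th) * cos th - Fu (t,ph,th) * sin th)) * ik th"

definition "g1 t ph th = ((Fu (t,ph,th) + Z th)\<^sup>2 + (Fv (t,ph,th))\<^sup>2) * cos th"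
definition "g2 t ph th = ((Omg t ph th - (Qs th - 2 * om * sin th))\<^sup>2 + 0\<^sup>2) * cos th"
definition "gt t ph th = - lam * (2 * (Fu (t,ph,th) + Z th) * uT (t,ph,th) + 2 * Fv (t,ph,th) * vT (t,ph,th)) * cos th
   + 2 * ((vP (t,ph,th) - (uH (t,ph,th) * cos th - Fu (t,ph,th) * sin th)) * ik th - (Qs th - 2 * om * sin th))
       * ((vPT (t,ph,th) - (uHT (t,ph,th) * cos th - uT (t,ph,th) * sin th)) * ik th) * cos th"

lemma cont_g1: "0 \<le> t \<Longrightarrow> continuous_on C (\<lambda>y. g1 t (fst y) (snd y))"
  unfolding g1_def by (intro continuous_intros Sm_all Sm_1 Sm_2) (auto simp: C_mem)
lemma cont_g2: "0 \<le> t \<Longrightarrow> continuous_on C (\<lambda>y. g2 t (fst y) (snd y))"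
  unfolding g2_def Omg_def by (intro continuous_intros Sm_all Sm_1 Sm_2) (auto simp: C_mem)
lemma cont_gt: "continuous_on ({0..} \<times> C) (\<lambda>(t, y). gt t (fst y) (snd y))"
  unfolding gt_def split_beta by (intro continuous_intros Sm_all Sm_1 Sm_2) (auto simp: C_mem)

end

context flow begin

lemma vort_eq: "0 \<le> t \<Longrightarrow> th \<in> {th1..th2} \<Longrightarrow> vort u v t ph th = Omg t ph th"
proof -
  assume t: "0 \<le> t" and th: "th \<in> {th1..th2}"
  have "d_phi v t ph th = vP (t,ph,th)"
    unfolding d_phi_def vP_def using dP[OF Sm_v t th, of ph]
    by (intro DERIV_imp_deriv) (simp add: Fv_def)
  moreover have "deriv (\<lambda>s. u t ph s * cos s) th = uH (t,ph,th) * cos th - Fu (t,ph,th) * sin th"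
  proof (rule DERIV_imp_deriv)
    have "((\<lambda>s. Fu (t,ph,s)) has_real_derivative uH (t,ph,th)) (at th)"
      unfolding uH_def by (rule dH[OF Sm_u t th])
    then have "((\<lambda>s. u t ph s) has_real_derivative uH (t,ph,th)) (at th)" by (simp add: Fu_def)
    then show "((\<lambda>s. u t ph s * cos s) has_real_derivative uH (t,ph,th) * cos th - Fu (t,ph,th) * sin th) (at th)"
      by (auto intro!: derivative_eq_intros simp: Fu_def)
  qed
  ultimately show ?thesis by (simp add: vort_def Omg_def ik_def)
qed

lemma zv_eq: "th \<in> {th1<..<th2} \<Longrightarrow> zonal_vort (\<lambda>s. - deriv Psi s) th = Qs th - 2 * om * sin th"
proof -
  assume th: "th \<in> {th1<..<th2}"
  have c: "cos th > 0" using cos_pos th by auto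
  have "((\<lambda>s. deriv Psi s * cos s) has_real_derivative deriv (\<lambda>s. deriv Psi s * cos s) th) (at th)"
    using Psi_diff2 th by (simp add: DERIV_deriv_iff_real_differentiable)
  then have "((\<lambda>s. - deriv Psi s * cos s) has_real_derivative - deriv (\<lambda>s. deriv Psi s * cos s) th) (at th)"
    using DERIV_minus by fastforce
  then have "deriv (\<lambda>s. - deriv Psi s * cos s) th = - (- lam * Psi th * cos th + Ups * cos th - om * sin (2 * th))"
    using Psi_ode th by (simp add: DERIV_imp_deriv)
  then have "deriv (\<lambda>s. - deriv Psi s * cos s) th = - (- lam * Psi th * cos th + Ups * cos th - om * (2 * sin th * cos th))"
    by (simp add: sin_double)
  then show ?thesis using c
    by (simp add: zonal_vort_def Qs_def field_simps)
qed

lemma L2_1: "0 \<le> t \<Longrightarrow> L2sq th1 th2 (\<lambda>ph th. u t ph th - (- deriv Psi th)) (\<lambda>ph th. v t ph th)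
     = integral C (\<lambda>y. g1 t (fst y) (snd y))"
  unfolding C_def
  by (rule L2_cbox, fold C_def, rule cont_g1) (auto simp: g1_def Fu_def Fv_def Z_eq)

lemma L2_2: "0 \<le> t \<Longrightarrow> L2sq th1 th2 (\<lambda>ph th. vort u v t ph th - zonal_vort (\<lambda>s. - deriv Psi s) th) (\<lambda>_ _. 0)
     = integral C (\<lambda>y. g2 t (fst y) (snd y))"
  unfolding C_def
  by (rule L2_cbox, fold C_def, rule cont_g2) (auto simp: g2_def vort_eq zv_eq)

definition "E t = integral C (\<lambda>y. - lam * g1 t (fst y) (snd y) + g2 t (fst y) (snd y))"

lemma E_eq: "0 \<le> t \<Longrightarrow> E t = - lam * integral C (\<lambda>y. g1 t (fst y) (snd y)) + integral C (\<lambda>y. g2 t (fst y) (snd y))"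
proof -
  assume t: "0 \<le> t"
  have i1: "(\<lambda>y. g1 t (fst y) (snd y)) integrable_on C"
    unfolding C_def by (rule integrable_continuous, fold C_def, rule cont_g1[OF t])
  have i2: "(\<lambda>y. g2 t (fst y) (snd y)) integrable_on C"
    unfolding C_def by (rule integrable_continuous, fold C_def, rule cont_g2[OF t])
  have i3: "(\<lambda>y. - lam * g1 t (fst y) (snd y)) integrable_on C"
    using integrable_on_cmult_left[OF i1, of "-lam"] by simp
  have "integral C (\<lambda>y. - lam * g1 t (fst y) (snd y) + g2 t (fst y) (snd y))
     = integral C (\<lambda>y. - lam * g1 t (fst y) (snd y)) + integral C (\<lambda>y. g2 t (fst y) (snd y))"
    by (rule integral_add[OF i3 i2])
  also have "integral C (\<lambda>y. - lam * g1 t (fst y) (snd y)) = - lam * integral C (\<lambda>y. g1 t (fst y) (snd y))"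
    using integral_mult[OF i1, of "-lam"] by simp
  finally show ?thesis unfolding E_def .
qed

lemma g_deriv: "0 \<le> t \<Longrightarrow> th \<in> {th1..th2} \<Longrightarrow>
  ((\<lambda>t. - lam * g1 t ph th + g2 t ph th) has_real_derivative gt t ph th) (at t)"
proof -
  assume t: "0 \<le> t" and th: "th \<in> {th1..th2}"
  note d = dT[OF Sm_u t th] dT[OF Sm_v t th] dT[OF Sm_1(3) t th] dT[OF Sm_1(5) t th]
  show ?thesis
    unfolding g1_def g2_def gt_def Omg_def
    by (rule derivative_eq_intros d refl | simp add: uT_def vT_def uHT_def vPT_def)+
       (simp add: algebra_simps power2_eq_square)
qed

end

context flow begin

definition "AA t ph th = lam * ((Fu (t,ph,th)) + (Z th)) * (2 * (Fp (t,ph,th)) + (Fu (t,ph,th))\<^sup>2 + (Fv (t,ph,th))\<^sup>2) - (Fu (t,ph,th)) * (((vP (t,ph,th)) - ((uH (t,ph,th)) * (cos th) - (Fu (t,ph,th)) * (sin th))) * (ik th) + 2 * om * (sin th))\<^sup>2 + 2 * (Qs th) * (Fu (t,ph,th)) * (((vP (t,ph,th)) - ((uH (t,ph,th)) * (cos th) - (Fu (t,ph,th)) * (sin th))) * (ik th) + 2 * om * (sin th))"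
definition "aa t ph th = lam * ((uP (t,ph,th)) * (2 * (Fp (t,ph,th)) + (Fu (t,ph,th))\<^sup>2 + (Fv (t,ph,th))\<^sup>2) + 2 * ((Fu (t,ph,th)) + (Z th)) * ((pP (t,ph,th)) + (Fu (t,ph,th)) * (uP (t,ph,th)) + (Fv (t,ph,th)) * (vP (t,ph,th)))) - (uP (t,ph,th)) * (((vP (t,ph,th)) - ((uH (t,ph,th)) * (cos th) - (Fu (t,ph,th)) * (sin th))) * (ik th) + 2 * om * (sin th))\<^sup>2 - 2 * (Fu (t,ph,th)) * (((vP (t,ph,th)) - ((uH (t,ph,th)) * (cos th) - (Fu (t,ph,th)) * (sin th))) * (ik th) + 2 * om * (sin th)) * (((vPP (t,ph,th)) - ((uHP (t,ph,th)) * (cos th) - (uP (t,ph,th)) * (sin th))) * (ik th)) + 2 * (Qs th) * ((uP (t,ph,th)) * (((vP (t,ph,th)) - ((uH (t,ph,th)) * (cos th) - (Fu (t,ph,th)) * (sin th))) * (ik th) + 2 * om * (sin th)) + (Fu (t,ph,th)) * (((vPP (t,ph,th)) - ((uHP (t,ph,th)) * (cos th) - (uP (t,ph,th)) * (sin th))) * (ik th)))"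
definition "BB t ph th = (cos th) * (Fv (t,ph,th)) * (lam * (2 * (Fp (t,ph,th)) + (Fu (t,ph,th))\<^sup>2 + (Fv (t,ph,th))\<^sup>2) - (((vP (t,ph,th)) - ((uH (t,ph,th)) * (cos th) - (Fu (t,ph,th)) * (sin th))) * (ik th) + 2 * om * (sin th))\<^sup>2 + 2 * (Qs th) * (((vP (t,ph,th)) - ((uH (t,ph,th)) * (cos th) - (Fu (t,ph,th)) * (sin th))) * (ik th) + 2 * om * (sin th)))"
definition "bb t ph th = ((cos th) * (vH (t,ph,th)) - (sin th) * (Fv (t,ph,th))) * (lam * (2 * (Fp (t,ph,th)) + (Fu (t,ph,th))\<^sup>2 + (Fv (t,ph,th))\<^sup>2) - (((vP (t,ph,th)) - ((uH (t,ph,th)) * (cos th) - (Fu (t,ph,th)) * (sin th))) * (ik th) + 2 * om * (sin th))\<^sup>2 + 2 * (Qs th) * (((vP (t,ph,th)) - ((uH (t,ph,th)) * (cos th) - (Fu (t,ph,th)) * (sin th))) * (ik th) + 2 * om * (sin th))) + (cos th) * (Fv (t,ph,th)) * (2 * lam * ((pH (t,ph,th)) + (Fu (t,ph,th)) * (uH (t,ph,th)) + (Fv (t,ph,th)) * (vH (t,ph,th))) - 2 * (((vP (t,ph,th)) - ((uH (t,ph,th)) * (cos th) - (Fu (t,ph,th)) * (sin th))) * (ik th) + 2 * om * (sin th)) * (((vPH (t,ph,th)) - ((uHH (t,ph,th)) * (cos th) - (uH (t,ph,th)) * (sin th) - ((uH (t,ph,th)) * (sin th) + (Fu (t,ph,th))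 * (cos th)))) * (ik th) + ((vP (t,ph,th)) - ((uH (t,ph,th)) * (cos th) - (Fu (t,ph,th)) * (sin th))) * ((sin th) * (ik th)\<^sup>2) + 2 * om * (cos th)) - 2 * lam * (Z th) * (((vP (t,ph,th)) - ((uH (t,ph,th)) * (cos th) - (Fu (t,ph,th)) * (sin th))) * (ik th) + 2 * om * (sin th)) + 2 * (Qs th) * (((vPH (t,ph,th)) - ((uHH (t,ph,th)) * (cos th) - (uH (t,ph,th)) * (sin th) - ((uH (t,ph,th)) * (sin th) + (Fu (t,ph,th)) * (cos th)))) * (ik th) + ((vP (t,ph,th)) - ((uH (t,ph,th)) * (cos th) - (Fu (t,ph,th)) * (sin th))) * ((sin th) * (ik th)\<^sup>2) + 2 * om * (cos th)))"
definition "rhs1 t ph th = - ((Fu (t,ph,th)) * (uP (t,ph,th)) * (ik th)) - (Fv (t,ph,th)) * (uH (t,ph,th)) + (Fu (t,ph,th)) * (Fv (t,ph,th)) * ((sin th) * (ik th)) + 2 * om * (Fv (t,ph,th)) * (sin th) - (pP (t,ph,th)) * (ik th)"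
definition "rhs2 t ph th = - ((Fu (t,ph,th)) * (vP (t,ph,th)) * (ik th)) - (Fv (t,ph,th)) * (vH (t,ph,th)) - (Fu (t,ph,th))\<^sup>2 * ((sin th) * (ik th)) - 2 * om * (Fu (t,ph,th)) * (sin th) - (pH (t,ph,th))"
definition "r3 t ph th = (uP (t,ph,th)) + ((vH (t,ph,th)) * (cos th) - (Fv (t,ph,th)) * (sin th))"
definition "e1h t ph th = - (((uH (t,ph,th)) * (uP (t,ph,th)) + (Fu (t,ph,th)) * (uHP (t,ph,th))) * (ik th) + (Fu (t,ph,th)) * (uP (t,ph,th)) * ((sin th) * (ik th)\<^sup>2)) - ((vH (t,ph,th)) * (uH (t,ph,th)) + (Fv (t,ph,th)) * (uHH (t,ph,th))) + (((uH (t,ph,th)) * (Fv (t,ph,th)) + (Fu (t,ph,th)) * (vH (t,ph,th))) * ((sin th) * (ik th)) + (Fu (t,ph,th)) * (Fv (t,ph,th)) * ((cos th) * (ik th) + (sin th) * ((sin th) * (ik th)\<^sup>2))) + 2 * om * ((vH (t,ph,th)) * (sin th) + (Fv (t,ph,th)) * (cos th)) - ((pPH (t,ph,th)) * (ik th) + (pP (t,ph,th)) * ((sin th) * (ik th)\<^sup>2))"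
definition "e2p t ph th = - (((uP (t,ph,th)) * (vP (t,ph,th)) + (Fu (t,ph,th)) * (vPP (t,ph,th))) * (ik th)) - ((vP (t,ph,th)) * (vH (t,ph,th)) + (Fv (t,ph,th)) * (vPH (t,ph,th))) - 2 * (Fu (t,ph,th)) * (uP (t,ph,th)) * ((sin th) * (ik th)) - 2 * om * (uP (t,ph,th)) * (sin th) - (pPH (t,ph,th))"
definition "r3p t ph th = (uPP (t,ph,th)) + ((vPH (t,ph,th)) * (cos th) - (vP (t,ph,th)) * (sin th))"
definition "r3h t ph th = (uHP (t,ph,th)) + ((vHH (t,ph,th)) * (cos th) - (vH (t,ph,th)) * (sin th) - ((vH (t,ph,th)) * (sin th) + (Fv (t,ph,th)) * (cos th)))"

lemma deriv_eq_open: "(f has_real_derivative D1) (at x) \<Longrightarrow> (g has_real_derivative D2) (at x) \<Longrightarrow> open S \<Longrightarrow> x \<in> S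
   \<Longrightarrow> (\<And>y. y \<in> S \<Longrightarrow> f y = g y) \<Longrightarrow> D1 = D2"
  by (metis DERIV_unique has_field_derivative_transform_within_open)

lemma deriv_zero_open: "(f has_real_derivative D) (at x) \<Longrightarrow> open S \<Longrightarrow> x \<in> S
   \<Longrightarrow> (\<And>y. y \<in> S \<Longrightarrow> f y = 0) \<Longrightarrow> D = 0"
  using deriv_eq_open[of f D x "\<lambda>_. 0" 0 S] by auto

lemma dtu: "0 \<le> t \<Longrightarrow> th \<in> {th1..th2} \<Longrightarrow> d_t u t ph th = uT (t,ph,th)"
  unfolding d_t_def uT_def by (rule DERIV_imp_deriv) (use dT[OF Sm_u, of t th ph] in \<open>simp add: Fu_def\<close>)
lemma dtv: "0 \<le> t \<Longrightarrow> th \<in> {th1..th2} \<Longrightarrow> d_t v t ph th = vT (t,ph,th)"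
  unfolding d_t_def vT_def by (rule DERIV_imp_deriv) (use dT[OF Sm_v, of t th ph] in \<open>simp add: Fv_def\<close>)
lemma dphiu: "0 \<le> t \<Longrightarrow> th \<in> {th1..th2} \<Longrightarrow> d_phi u t ph th = uP (t,ph,th)"
  unfolding d_phi_def uP_def by (rule DERIV_imp_deriv) (use dP[OF Sm_u, of t th ph] in \<open>simp add: Fu_def\<close>)
lemma dphiv: "0 \<le> t \<Longrightarrow> th \<in> {th1..th2} \<Longrightarrow> d_phi v t ph th = vP (t,ph,th)"
  unfolding d_phi_def vP_def by (rule DERIV_imp_deriv) (use dP[OF Sm_v, of t th ph] in \<open>simp add: Fv_def\<close>)
lemma dphip: "0 \<le> t \<Longrightarrow> th \<in> {th1..th2} \<Longrightarrow> d_phi p t ph th = pP (t,ph,th)"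
  unfolding d_phi_def pP_def by (rule DERIV_imp_deriv) (use dP[OF Sm_p, of t th ph] in \<open>simp add: Fp_def\<close>)
lemma dthu: "0 \<le> t \<Longrightarrow> th \<in> {th1..th2} \<Longrightarrow> d_theta u t ph th = uH (t,ph,th)"
  unfolding d_theta_def uH_def by (rule DERIV_imp_deriv) (use dH[OF Sm_u, of t th ph] in \<open>simp add: Fu_def\<close>)
lemma dthv: "0 \<le> t \<Longrightarrow> th \<in> {th1..th2} \<Longrightarrow> d_theta v t ph th = vH (t,ph,th)"
  unfolding d_theta_def vH_def by (rule DERIV_imp_deriv) (use dH[OF Sm_v, of t th ph] in \<open>simp add: Fv_def\<close>)
lemma dthp: "0 \<le> t \<Longrightarrow> th \<in> {th1..th2} \<Longrightarrow> d_theta p t ph th = pH (t,ph,th)"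
  unfolding d_theta_def pH_def by (rule DERIV_imp_deriv) (use dH[OF Sm_p, of t th ph] in \<open>simp add: Fp_def\<close>)
lemma dvcos: "0 \<le> t \<Longrightarrow> th \<in> {th1..th2} \<Longrightarrow>
    deriv (\<lambda>s. v t ph s * cos s) th = vH (t,ph,th) * cos th - Fv (t,ph,th) * sin th"
proof (rule DERIV_imp_deriv)
  assume t: "0 \<le> t" and th: "th \<in> {th1..th2}"
  have "((\<lambda>s. Fv (t,ph,s)) has_real_derivative vH (t,ph,th)) (at th)"
    unfolding vH_def by (rule dH[OF Sm_v t th])
  then have "((\<lambda>s. v t ph s) has_real_derivative vH (t,ph,th)) (at th)" by (simp add: Fv_def)
  then show "((\<lambda>s. v t ph s * cos s) has_real_derivative vH (t,ph,th) * cos th - Fv (t,ph,th) * sin th) (at th)"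
    by (auto intro!: derivative_eq_intros simp: Fv_def)
qed

lemma uFv: "u t ph th = Fu (t,ph,th)" "v t ph th = Fv (t,ph,th)" by (simp_all add: Fu_def Fv_def)

lemma rel1: "0 < t \<Longrightarrow> th \<in> {th1<..<th2} \<Longrightarrow> uT (t,ph,th) = rhs1 t ph th"
proof -
  assume t: "0 < t" and th: "th \<in> {th1<..<th2}"
  then have t': "0 \<le> t" and th': "th \<in> {th1..th2}" by auto
  have c: "cos th > 0" using cos_pos th' by auto
  have e0: "d_t u t ph th + u t ph th * d_phi u t ph th / cos th + v t ph th * d_theta u t ph th
        - u t ph th * v t ph th * tan th - 2 * om * v t ph th * sin th
        = - d_phi p t ph th / cos th" using eq1 t th by blast
  have e: "uT (t,ph,th) + Fu (t,ph,th) * uP (t,ph,th) / cos th + Fv (t,ph,th) * uH (t,ph,th)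
        - Fu (t,ph,th) * Fv (t,ph,th) * tan th - 2 * om * Fv (t,ph,th) * sin th
        = - pP (t,ph,th) / cos th"
    using e0 unfolding dtu[OF t' th'] dphiu[OF t' th'] dthu[OF t' th'] dphip[OF t' th'] by (simp add: Fu_def Fv_def)
  show ?thesis using e unfolding rhs1_def ik_def tan_def by (simp add: times_divide_eq_right)
qed

lemma rel2: "0 < t \<Longrightarrow> th \<in> {th1<..<th2} \<Longrightarrow> vT (t,ph,th) = rhs2 t ph th"
proof -
  assume t: "0 < t" and th: "th \<in> {th1<..<th2}"
  then have t': "0 \<le> t" and th': "th \<in> {th1..th2}" by auto
  have c: "cos th > 0" using cos_pos th' by auto
  have e0: "d_t v t ph th + u t ph th * d_phi v t ph th / cos th + v t ph th * d_theta v t ph th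
        + (u t ph th)\<^sup>2 * tan th + 2 * om * u t ph th * sin th
        = - d_theta p t ph th" using eq2 t th by blast
  have e: "vT (t,ph,th) + Fu (t,ph,th) * vP (t,ph,th) / cos th + Fv (t,ph,th) * vH (t,ph,th)
        + (Fu (t,ph,th))\<^sup>2 * tan th + 2 * om * Fu (t,ph,th) * sin th
        = - pH (t,ph,th)"
    using e0 unfolding dtv[OF t' th'] dphiv[OF t' th'] dthv[OF t' th'] dthp[OF t' th'] by (simp add: Fu_def Fv_def)
  show ?thesis using e unfolding rhs2_def ik_def tan_def by (simp add: times_divide_eq_right)
qed

lemma rel3: "0 < t \<Longrightarrow> th \<in> {th1<..<th2} \<Longrightarrow> r3 t ph th = 0"
proof -
  assume t: "0 < t" and th: "th \<in> {th1<..<th2}"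
  then have t': "0 \<le> t" and th': "th \<in> {th1..th2}" by auto
  show ?thesis
    using eq3[rule_format, OF t th, of ph] unfolding dphiu[OF t' th'] dvcos[OF t' th'] r3_def .
qed

lemma duP_H: "0 \<le> t \<Longrightarrow> th \<in> {th1..th2} \<Longrightarrow> ((\<lambda>y. uP (t,ph,y)) has_real_derivative uHP (t,ph,th)) (at th)"
  using dH[OF Sm_1(2), of t th ph] sw[OF Sm_u, of t th 2 1 ph] by (simp add: uP_def uHP_def uH_def)
lemma dvH_P: "0 \<le> t \<Longrightarrow> th \<in> {th1..th2} \<Longrightarrow> ((\<lambda>y. vH (t,y,th)) has_real_derivative vPH (t,ph,th)) (at ph)"
  using dP[OF Sm_1(6), of t th ph] sw[OF Sm_v, of t th 1 2 ph] by (simp add: vH_def vPH_def vP_def)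
lemma dpH_P: "0 \<le> t \<Longrightarrow> th \<in> {th1..th2} \<Longrightarrow> ((\<lambda>y. pH (t,y,th)) has_real_derivative pPH (t,ph,th)) (at ph)"
  using dP[OF Sm_1(8), of t th ph] sw[OF Sm_p, of t th 1 2 ph] by (simp add: pH_def pPH_def pP_def)
lemma duT_H: "0 \<le> t \<Longrightarrow> th \<in> {th1..th2} \<Longrightarrow> ((\<lambda>y. uT (t,ph,y)) has_real_derivative uHT (t,ph,th)) (at th)"
  using dH[OF Sm_1(1), of t th ph] sw[OF Sm_u, of t th 2 0 ph] by (simp add: uT_def uHT_def uH_def)
lemma dvT_P: "0 \<le> t \<Longrightarrow> th \<in> {th1..th2} \<Longrightarrow> ((\<lambda>y. vT (t,y,th)) has_real_derivative vPT (t,ph,th)) (at ph)"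
  using dP[OF Sm_1(4), of t th ph] sw[OF Sm_v, of t th 1 0 ph] by (simp add: vT_def vPT_def vP_def)

lemma dHs:
  assumes "0 \<le> t" "th \<in> {th1..th2}"
  shows "((\<lambda>y. Fu (t,ph,y)) has_real_derivative uH (t,ph,th)) (at th)"
    "((\<lambda>y. Fv (t,ph,y)) has_real_derivative vH (t,ph,th)) (at th)"
    "((\<lambda>y. Fp (t,ph,y)) has_real_derivative pH (t,ph,th)) (at th)"
    "((\<lambda>y. uH (t,ph,y)) has_real_derivative uHH (t,ph,th)) (at th)"
    "((\<lambda>y. vH (t,ph,y)) has_real_derivative vHH (t,ph,th)) (at th)"
    "((\<lambda>y. vP (t,ph,y)) has_real_derivative vPH (t,ph,th)) (at th)"
    "((\<lambda>y. pP (t,ph,y)) has_real_derivative pPH (t,ph,th)) (at th)"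
  using assms dH[OF Sm_u, of t th ph] dH[OF Sm_v, of t th ph] dH[OF Sm_p, of t th ph]
    dH[OF Sm_1(3), of t th ph] dH[OF Sm_1(6), of t th ph] dH[OF Sm_1(5), of t th ph] dH[OF Sm_1(7), of t th ph]
  by (simp_all add: uH_def vH_def pH_def uHH_def vHH_def vPH_def pPH_def)

lemma dPs:
  assumes "0 \<le> t" "th \<in> {th1..th2}"
  shows "((\<lambda>y. Fu (t,y,th)) has_real_derivative uP (t,ph,th)) (at ph)"
    "((\<lambda>y. Fv (t,y,th)) has_real_derivative vP (t,ph,th)) (at ph)"
    "((\<lambda>y. Fp (t,y,th)) has_real_derivative pP (t,ph,th)) (at ph)"
    "((\<lambda>y. uH (t,y,th)) has_real_derivative uHP (t,ph,th)) (at ph)"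
    "((\<lambda>y. uP (t,y,th)) has_real_derivative uPP (t,ph,th)) (at ph)"
    "((\<lambda>y. vP (t,y,th)) has_real_derivative vPP (t,ph,th)) (at ph)"
  using assms dP[OF Sm_u, of t th ph] dP[OF Sm_v, of t th ph] dP[OF Sm_p, of t th ph]
    dP[OF Sm_1(3), of t th ph] dP[OF Sm_1(2), of t th ph] dP[OF Sm_1(5), of t th ph]
  by (simp_all add: uP_def vP_def pP_def uHP_def uPP_def vPP_def)

lemma rel1h: "0 < t \<Longrightarrow> th \<in> {th1<..<th2} \<Longrightarrow> uHT (t,ph,th) = e1h t ph th"
proof -
  assume t: "0 < t" and th: "th \<in> {th1<..<th2}"
  then have t': "0 \<le> t" and th': "th \<in> {th1..th2}" by auto
  note d = dHs[OF t' th'] duP_H[OF t' th'] ik_deriv[OF th']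
  have f2: "((\<lambda>y. rhs1 t ph y) has_real_derivative e1h t ph th) (at th)"
    unfolding rhs1_def e1h_def
    by (rule derivative_eq_intros d refl)+
       (simp add: algebra_simps power2_eq_square)
  show ?thesis
    by (rule deriv_eq_open[OF duT_H[OF t' th'] f2, of "{th1<..<th2}"]) (use th rel1 t in auto)
qed


lemma rel2p: "0 < t \<Longrightarrow> th \<in> {th1<..<th2} \<Longrightarrow> vPT (t,ph,th) = e2p t ph th"
proof -
  assume t: "0 < t" and th: "th \<in> {th1<..<th2}"
  then have t': "0 \<le> t" and th': "th \<in> {th1..th2}" by auto
  note d = dPs[OF t' th'] dvH_P[OF t' th'] dpH_P[OF t' th']
  have f2: "((\<lambda>y. rhs2 t y th) has_real_derivative e2p t ph th) (at ph)"
    unfolding rhs2_def e2p_def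
    by (rule derivative_eq_intros d refl)+ (simp add: algebra_simps power2_eq_square)
  show ?thesis
    by (rule deriv_eq_open[OF dvT_P[OF t' th'] f2, of UNIV]) (use th rel2 t in auto)
qed

lemma rel3p: "0 < t \<Longrightarrow> th \<in> {th1<..<th2} \<Longrightarrow> r3p t ph th = 0"
proof -
  assume t: "0 < t" and th: "th \<in> {th1<..<th2}"
  then have t': "0 \<le> t" and th': "th \<in> {th1..th2}" by auto
  note d = dPs[OF t' th'] dvH_P[OF t' th']
  have f2: "((\<lambda>y. r3 t y th) has_real_derivative r3p t ph th) (at ph)"
    unfolding r3_def r3p_def
    by (rule derivative_eq_intros d refl)+ (simp add: algebra_simps)
  show ?thesis
    by (rule deriv_zero_open[OF f2, of UNIV]) (use th rel3 t in auto)
qed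

lemma rel3h: "0 < t \<Longrightarrow> th \<in> {th1<..<th2} \<Longrightarrow> r3h t ph th = 0"
proof -
  assume t: "0 < t" and th: "th \<in> {th1<..<th2}"
  then have t': "0 \<le> t" and th': "th \<in> {th1..th2}" by auto
  note d = dHs[OF t' th'] duP_H[OF t' th']
  have f2: "((\<lambda>y. r3 t ph y) has_real_derivative r3h t ph th) (at th)"
    unfolding r3_def r3h_def
    by (rule derivative_eq_intros d refl)+ (simp add: algebra_simps)
  show ?thesis
    by (rule deriv_zero_open[OF f2, of "{th1<..<th2}"]) (use th rel3 t in auto)
qed

lemma gt_split: "0 < t \<Longrightarrow> th \<in> {th1<..<th2} \<Longrightarrow> gt t ph th = aa t ph th + bb t ph th"
proof -
  assume t: "0 < t" and th: "th \<in> {th1<..<th2}"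
  then have th': "th \<in> {th1..th2}" by auto
  note r = rel1[OF t th, of ph] rel2[OF t th, of ph] rel3[OF t th, of ph] rel1h[OF t th, of ph]
    rel2p[OF t th, of ph] rel3p[OF t th, of ph] rel3h[OF t th, of ph]
  show ?thesis
    unfolding gt_def aa_def bb_def
    by (rule alg[OF ik_cos[OF th'] sin_cos_squared_add r[unfolded rhs1_def rhs2_def r3_def e1h_def e2p_def r3p_def r3h_def]])
qed

lemma AA_deriv: "0 \<le> t \<Longrightarrow> th \<in> {th1..th2} \<Longrightarrow> ((\<lambda>y. AA t y th) has_real_derivative aa t ph th) (at ph)"
proof -
  assume t': "0 \<le> t" and th': "th \<in> {th1..th2}"
  note d = dPs[OF t' th']
  show ?thesis
    unfolding AA_def aa_def
    by (rule derivative_eq_intros d refl | (simp; fail))+ (simp add: algebra_simps power2_eq_square)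
qed

lemma BB_deriv: "0 \<le> t \<Longrightarrow> th \<in> {th1<..<th2} \<Longrightarrow> ((\<lambda>y. BB t ph y) has_real_derivative bb t ph th) (at th)"
proof -
  assume t': "0 \<le> t" and th: "th \<in> {th1<..<th2}"
  then have th': "th \<in> {th1..th2}" by auto
  note d = dHs[OF t' th'] ik_deriv[OF th'] Qs_deriv[OF th]
  show ?thesis
    unfolding BB_def bb_def
    by (rule derivative_eq_intros d refl | (simp; fail))+ (simp add: algebra_simps power2_eq_square)
qed

lemma AA_per: "AA t (2*pi) th = AA t 0 th"
  using Sm_per[OF Sm_u, of t 0 th] Sm_per[OF Sm_v, of t 0 th] Sm_per[OF Sm_p, of t 0 th]
    Sm_per[OF Sm_1(3), of t 0 th] Sm_per[OF Sm_1(5), of t 0 th]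
  unfolding AA_def by simp

lemma BB_bd: "0 \<le> t \<Longrightarrow> BB t ph th1 = 0 \<and> BB t ph th2 = 0"
  using bc unfolding BB_def by (simp add: Fv_def)

lemma cont_aa: "0 \<le> t \<Longrightarrow> continuous_on C (\<lambda>y. aa t (fst y) (snd y))"
  unfolding aa_def by (intro continuous_intros Sm_all Sm_1 Sm_2) (auto simp: C_mem)
lemma cont_aa_th: "0 \<le> t \<Longrightarrow> continuous_on {th1..th2} (\<lambda>th. aa t ph th)"
  unfolding aa_def by (intro continuous_intros Sm_all Sm_1 Sm_2) auto
lemma cont_bb_th: "0 \<le> t \<Longrightarrow> continuous_on {th1..th2} (\<lambda>th. bb t ph th)"
  unfolding bb_def by (intro continuous_intros Sm_all Sm_1 Sm_2) auto
lemma cont_BB_th: "0 \<le> t \<Longrightarrow> continuous_on {th1..th2} (\<lambda>th. BB t ph th)"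
  unfolding BB_def by (intro continuous_intros Sm_all Sm_1 Sm_2) auto
lemma cont_gt_C: "0 \<le> t \<Longrightarrow> continuous_on C (\<lambda>y. gt t (fst y) (snd y))"
  unfolding gt_def by (intro continuous_intros Sm_all Sm_1 Sm_2) (auto simp: C_mem)

lemma gt_int_zero: "0 < t \<Longrightarrow> integral C (\<lambda>y. gt t (fst y) (snd y)) = 0"
proof -
  assume t: "0 < t"
  then have t': "0 \<le> t" by simp
  have "integral C (\<lambda>y. gt t (fst y) (snd y)) = integral {0..2*pi} (\<lambda>ph. integral {th1..th2} (\<lambda>th. gt t ph th))"
    using integral_prod_continuous[OF cont_gt_C[OF t', unfolded C_def]] by (simp add: C_def)
  also have "\<dots> = integral {0..2*pi} (\<lambda>ph. integral {th1..th2} (\<lambda>th. aa t ph th))"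
  proof (rule integral_cong)
    fix ph
    have "integral {th1..th2} (\<lambda>th. gt t ph th) = integral {th1..th2} (\<lambda>th. aa t ph th + bb t ph th)"
      by (rule integral_spike[of "{th1, th2}"]) (auto simp: gt_split[OF t])
    also have "\<dots> = integral {th1..th2} (\<lambda>th. aa t ph th) + integral {th1..th2} (\<lambda>th. bb t ph th)"
      by (rule integral_add) (auto intro!: integrable_continuous_real cont_aa_th cont_bb_th t')
    also have "integral {th1..th2} (\<lambda>th. bb t ph th) = BB t ph th2 - BB t ph th1"
    proof (rule integral_unique, rule fundamental_theorem_of_calculus_interior)
      show "th1 \<le> th2" using th_bounds by simp
      show "continuous_on {th1..th2} (\<lambda>th. BB t ph th)" by (rule cont_BB_th[OF t'])
      show "((\<lambda>y. BB t ph y) has_vector_derivative bb t ph x) (at x)" if "x \<in> {th1<..<th2}" for x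
        using BB_deriv[OF t' that] by (simp add: has_real_derivative_iff_has_vector_derivative)
    qed
    also have "\<dots> = 0" using BB_bd[OF t'] by simp
    finally show "integral {th1..th2} (\<lambda>th. gt t ph th) = integral {th1..th2} (\<lambda>th. aa t ph th)" by simp
  qed
  also have "\<dots> = integral {th1..th2} (\<lambda>th. integral {0..2*pi} (\<lambda>ph. aa t ph th))"
    using integral_swap_continuous[of 0 th1 "2*pi" th2 "\<lambda>ph th. aa t ph th"] cont_aa[OF t']
    by (simp add: C_def split_beta)
  also have "\<dots> = integral {th1..th2} (\<lambda>th. 0)"
  proof (rule integral_cong)
    fix th assume th: "th \<in> {th1..th2}"
    have "integral {0..2*pi} (\<lambda>ph. aa t ph th) = AA t (2*pi) th - AA t 0 th"
    proof (rule integral_unique, rule fundamental_theorem_of_calculus)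
      show "0 \<le> 2*pi" by simp
      show "((\<lambda>y. AA t y th) has_vector_derivative aa t x th) (at x within {0..2*pi})" if "x \<in> {0..2*pi}" for x
        using AA_deriv[OF t' th, of x]
        by (simp add: has_real_derivative_iff_has_vector_derivative has_vector_derivative_at_within)
    qed
    then show "integral {0..2*pi} (\<lambda>ph. aa t ph th) = 0" using AA_per by simp
  qed
  also have "\<dots> = 0" by simp
  finally show ?thesis .
qed

end

context flow begin


lemma E_deriv: "0 \<le> t \<Longrightarrow> (E has_real_derivative integral C (\<lambda>y. gt t (fst y) (snd y))) (at t within {0..})"
  unfolding E_def C_def
proof (rule leibniz_rule_field_derivative)
  fix x :: real and y :: "real \<times> real"
  assume x: "x \<in> {0..}" and y: "y \<in> cbox (0, th1) (2 * pi, th2)"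
  have "snd y \<in> {th1..th2}" using y C_mem[of y] by (simp add: C_def)
  then show "((\<lambda>x. - lam * g1 x (fst y) (snd y) + g2 x (fst y) (snd y)) has_real_derivative gt x (fst y) (snd y)) (at x within {0..})"
    using g_deriv[of x "snd y" "fst y"] x by (auto intro: has_field_derivative_at_within)
next
  fix x :: real assume x: "x \<in> {0..}"
  show "(\<lambda>y. - lam * g1 x (fst y) (snd y) + g2 x (fst y) (snd y)) integrable_on cbox (0, th1) (2 * pi, th2)"
    by (rule integrable_continuous, fold C_def) (use x in \<open>auto intro!: continuous_intros cont_g1 cont_g2\<close>)
next
  show "continuous_on ({0..} \<times> cbox (0, th1) (2 * pi, th2)) (\<lambda>(x, y). gt x (fst y) (snd y))"
    using cont_gt by (simp add: C_def)
qed auto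

lemma E_const: "0 \<le> t \<Longrightarrow> E t = E 0"
proof (cases "t = 0")
  case False
  assume t: "0 \<le> t"
  then have tp: "0 < t" using False by simp
  have "continuous (at x within {0..}) E" if "x \<in> {0..}" for x
    using E_deriv[of x] that by (auto intro: DERIV_continuous)
  then have "continuous_on {0..} E" by (simp add: continuous_on_eq_continuous_within)
  then have c: "continuous_on {0..t} E" by (rule continuous_on_subset) auto
  show ?thesis
  proof (rule DERIV_isconst_end[OF tp c])
    fix x :: real assume x: "0 < x" "x < t"
    have "at x within {0..} = at x"
      by (rule at_within_interior) (use x in auto)
    then show "(E has_real_derivative 0) (at x)"
      using E_deriv[of x] gt_int_zero[of x] x by simp
  qed
qed simp

end


theorem theorem3p2:
  fixes \<omega> th1 th2 \<psi>1 \<psi>2 lam Ups :: real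
    and \<Psi> :: "real \<Rightarrow> real"
    and u v p :: "real \<Rightarrow> real \<Rightarrow> real \<Rightarrow> real"
    and U :: "pt3 set"
  assumes omega_pos: "\<omega> > 0"
    and th_bounds: "- (pi/2) < th1" "th1 < th2" "th2 < 0"
    and psi_ne: "\<psi>1 \<noteq> \<psi>2"
    and lam_nonpos: "lam \<le> 0"
    \<comment> \<open>\<Psi> = \<Psi>_{lam,Ups} solves the boundary value problem\<close>
    and Psi_cont: "continuous_on {th1..th2} \<Psi>"
    and Psi_diff: "\<forall>th\<in>{th1<..<th2}. \<Psi> differentiable (at th)"
    and Psi_diff2: "\<forall>th\<in>{th1<..<th2}. (\<lambda>s. deriv \<Psi> s * cos s) differentiable (at th)"
    and Psi_ode: "\<forall>th\<in>{th1<..<th2}. deriv (\<lambda>s. deriv \<Psi> s * cos s) th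
                    = - lam * \<Psi> th * cos th + Ups * cos th - \<omega> * sin (2 * th)"
    and Psi_bc: "\<Psi> th1 = \<psi>1" "\<Psi> th2 = \<psi>2"
    \<comment> \<open>u, v, p: classical (smooth) solution, 2pi-periodic in phi\<close>
    and U_cover: "{(t, ph, th). 0 \<le> t \<and> th1 \<le> th \<and> th \<le> th2} \<subseteq> U"
    and u_smooth: "smooth3_on U (\<lambda>(t, ph, th). u t ph th)"
    and v_smooth: "smooth3_on U (\<lambda>(t, ph, th). v t ph th)"
    and p_smooth: "smooth3_on U (\<lambda>(t, ph, th). p t ph th)"
    and periodic: "\<forall>t ph th. u t (ph + 2*pi) th = u t ph th \<and> v t (ph + 2*pi) th = v t ph th
                               \<and> p t (ph + 2*pi) th = p t ph th"
    and eq1: "\<forall>t>0. \<forall>ph. \<forall>th\<in>{th1<..<th2}.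
        d_t u t ph th + u t ph th * d_phi u t ph th / cos th + v t ph th * d_theta u t ph th
        - u t ph th * v t ph th * tan th - 2 * \<omega> * v t ph th * sin th
        = - d_phi p t ph th / cos th"
    and eq2: "\<forall>t>0. \<forall>ph. \<forall>th\<in>{th1<..<th2}.
        d_t v t ph th + u t ph th * d_phi v t ph th / cos th + v t ph th * d_theta v t ph th
        + (u t ph th)\<^sup>2 * tan th + 2 * \<omega> * u t ph th * sin th
        = - d_theta p t ph th"
    and eq3: "\<forall>t>0. \<forall>ph. \<forall>th\<in>{th1<..<th2}.
        d_phi u t ph th + deriv (\<lambda>s. v t ph s * cos s) th = 0"
    and bc: "\<forall>t\<ge>0. \<forall>ph. v t ph th1 = 0 \<and> v t ph th2 = 0"
    and t_nonneg: "t \<ge> 0"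
  shows "- lam * L2sq th1 th2 (\<lambda>ph th. u t ph th - (- deriv \<Psi> th)) (\<lambda>ph th. v t ph th)
         + L2sq th1 th2 (\<lambda>ph th. vort u v t ph th - zonal_vort (\<lambda>s. - deriv \<Psi> s) th) (\<lambda>_ _. 0)
       = - lam * L2sq th1 th2 (\<lambda>ph th. u 0 ph th - (- deriv \<Psi> th)) (\<lambda>ph th. v 0 ph th)
         + L2sq th1 th2 (\<lambda>ph th. vort u v 0 ph th - zonal_vort (\<lambda>s. - deriv \<Psi> s) th) (\<lambda>_ _. 0)"
  proof -
  have cosp: "cos x > 0" if "x \<in> {th1..th2}" for x
    using th_bounds that by (intro cos_gt_zero_pi) auto
  have hd: "((\<lambda>s. deriv \<Psi> s * cos s) has_real_derivative
      (- lam * \<Psi> x * cos x + Ups * cos x - \<omega> * sin (2 * x))) (at x)" if "x \<in> {th1<..<th2}" for x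
    using Psi_diff2 Psi_ode that by (metis DERIV_deriv_iff_real_differentiable)
  have gc: "continuous_on {th1..th2} (\<lambda>x. - lam * \<Psi> x * cos x + Ups * cos x - \<omega> * sin (2 * x))"
    by (intro continuous_intros Psi_cont)
  obtain Z where Zc: "continuous_on {th1..th2} Z"
    and Zh: "\<And>x. x \<in> {th1<..<th2} \<Longrightarrow> deriv \<Psi> x * cos x = Z x * cos x"
    using psi_ext[OF th_bounds(2) cosp hd gc] by blast
  have Zeq: "deriv \<Psi> x = Z x" if "x \<in> {th1<..<th2}" for x
    using Zh[OF that] cosp[of x] that by auto
  interpret flow \<omega> th1 th2 lam Ups \<Psi> Z u v p U
    by (unfold_locales) (use th_bounds Psi_cont Psi_diff Psi_diff2 Psi_ode Zc Zeq U_cover u_smooth v_smooth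
          p_smooth periodic eq1 eq2 eq3 bc in auto)
  show ?thesis
    using E_const[OF t_nonneg] E_eq[OF t_nonneg] E_eq[of 0] L2_1[OF t_nonneg] L2_1[of 0]
      L2_2[OF t_nonneg] L2_2[of 0] by simp
qed

end
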